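(* Let $t'$ be a feasible type report profile, let buyer $m$ be the winner under efficient allocation, and let $LCC_m=(l_1,l_2,\dots,l_q=m)$. Let $l_i\in LCC_m$ be an intermediate node. If, when $l_i$'s report changes from $r'_{l_i}$ to $r'_{l_i}\setminus {r^*_{l_i}}'$, the winner under efficient allocation becomes a buyer $m'\ne m$, then $\{l_{i+1},l_{i+2},\dots,l_q\}\cap LCC_{m'}=\emptyset$, where $LCC_{m'}$ is the lowest-cost trading chain to $m'$ under the modified profile.
   Context: Setting. A seller $s$ sells one indivisible commodity. Besides $s$, there is a set $N$ of agents, each either a buyer or an intermediate node. Each buyer $i$ reports a bid $b'_i\ge 0$. Each intermediate node $i$ has a neighbour set $r_i\subseteq N$, reports $r'_i\subseteq r_i$ (the agents to whom she passes the sale information), and has a publicly known cost $c_i$ incurred if a trade passes through her. Buyers have no links among themselves. Initially only the seller's neighbours $r_s$ know of the sale. A trading chain from $s$ to $i$ under reports $t'$ is a simple path $(a_1,\dots,a_p,i)$ with $a_1\in r_s$, $a_l\in r'_{a_{l-1}}$ for $1<l\le p$, $i\in r'_{a_p}$. A report profile is feasible if exactly the agents reachable from $s$ by trading chains (following the others' reports) participate; when an agent changes her report the others' profile adjusts to stay feasible. $LCC_i$ is a trading chain from $s$ to $i$ minimizing the total cost of the intermediate nodes on it other than $i$. For a buyer $i$, $SW_i=b'_i-\sum_{j\in LCC_i\setminus\{i\}}c_j$. The winner under efficient allocation is $m=\arg\max_i SW_i$, and the item is traded along $LCC_m$. Threshold neighbourhood. For an intermediate node $i$, ${r_i^*}'$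 is a minimum-cardinality subset $r''\subseteq r'_i$ such that, when $i$ reports $r'_i\setminus r''$ instead of $r'_i$, the winner under efficient allocation changes to a buyer other than $m$; if no such subset exists, ${r_i^*}'=r'_i$. *)

theory Defs
  imports Complex_Main
begin

text \<open>Agents have a linearly ordered type; the order is only used to break ties
  in the arg max defining the winner.  N is the set of agents (seller excluded),
  B \<subseteq> N the buyers, N - B the intermediate nodes, rs the seller's neighbours,
  rep i the reported neighbour set of intermediate node i, c the public costs,
  b the reported bids.\<close>

definition trading_chain ::
  "'a set \<Rightarrow> 'a set \<Rightarrow> 'a set \<Rightarrow> ('a \<Rightarrow> 'a set) \<Rightarrow> 'a list \<Rightarrow> 'a \<Rightarrow> bool" where
  "trading_chain N B rs rep xs i \<longleftrightarrow>
     xs \<noteq> [] \<and> last xs = i \<and> distinct xs \<and> set xs \<subseteq> N \<and> hd xs \<in> rs \<and>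
     (\<forall>k. Suc k < length xs \<longrightarrow> xs ! k \<in> N - B \<and> xs ! Suc k \<in> rep (xs ! k))"

definition chain_cost :: "('a \<Rightarrow> real) \<Rightarrow> 'a list \<Rightarrow> real" where
  "chain_cost c xs = sum_list (map c (butlast xs))"

definition reachable ::
  "'a set \<Rightarrow> 'a set \<Rightarrow> 'a set \<Rightarrow> ('a \<Rightarrow> 'a set) \<Rightarrow> 'a \<Rightarrow> bool" where
  "reachable N B rs rep i \<longleftrightarrow> (\<exists>xs. trading_chain N B rs rep xs i)"

definition is_LCC ::
  "'a set \<Rightarrow> 'a set \<Rightarrow> 'a set \<Rightarrow> ('a \<Rightarrow> 'a set) \<Rightarrow> ('a \<Rightarrow> real) \<Rightarrow> 'a list \<Rightarrow> 'a \<Rightarrow> bool" where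
  "is_LCC N B rs rep c xs i \<longleftrightarrow> trading_chain N B rs rep xs i \<and>
     (\<forall>ys. trading_chain N B rs rep ys i \<longrightarrow> chain_cost c xs \<le> chain_cost c ys)"

text \<open>SW_i = b_i minus the cost of LCC_i (meaningful for reachable i).\<close>
definition SW ::
  "'a set \<Rightarrow> 'a set \<Rightarrow> 'a set \<Rightarrow> ('a \<Rightarrow> 'a set) \<Rightarrow> ('a \<Rightarrow> real) \<Rightarrow> ('a \<Rightarrow> real) \<Rightarrow> 'a \<Rightarrow> real" where
  "SW N B rs rep c b i =
     b i - Min {chain_cost c xs | xs. trading_chain N B rs rep xs i}"

definition is_winner ::
  "'a::linorder set \<Rightarrow> 'a set \<Rightarrow> 'a set \<Rightarrow> ('a \<Rightarrow> 'a set) \<Rightarrow> ('a \<Rightarrow> real) \<Rightarrow> ('a \<Rightarrow> real) \<Rightarrow> 'a \<Rightarrow> bool" where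
  "is_winner N B rs rep c b m \<longleftrightarrow> m \<in> B \<and> reachable N B rs rep m \<and>
     (\<forall>k\<in>B. reachable N B rs rep k \<longrightarrow>
        SW N B rs rep c b k < SW N B rs rep c b m \<or>
        (SW N B rs rep c b k = SW N B rs rep c b m \<and> m \<le> k))"

definition winner_changes ::
  "'a::linorder set \<Rightarrow> 'a set \<Rightarrow> 'a set \<Rightarrow> ('a \<Rightarrow> 'a set) \<Rightarrow> ('a \<Rightarrow> real) \<Rightarrow> ('a \<Rightarrow> real)
     \<Rightarrow> 'a \<Rightarrow> 'a \<Rightarrow> 'a set \<Rightarrow> bool" where
  "winner_changes N B rs rep c b m i R \<longleftrightarrow>
     (\<exists>m'. m' \<noteq> m \<and> is_winner N B rs (rep(i := rep i - R)) c b m')"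

definition is_threshold ::
  "'a::linorder set \<Rightarrow> 'a set \<Rightarrow> 'a set \<Rightarrow> ('a \<Rightarrow> 'a set) \<Rightarrow> ('a \<Rightarrow> real) \<Rightarrow> ('a \<Rightarrow> real)
     \<Rightarrow> 'a \<Rightarrow> 'a \<Rightarrow> 'a set \<Rightarrow> bool" where
  "is_threshold N B rs rep c b m i R \<longleftrightarrow>
     (R \<subseteq> rep i \<and> winner_changes N B rs rep c b m i R \<and>
        (\<forall>R'. R' \<subseteq> rep i \<longrightarrow> winner_changes N B rs rep c b m i R' \<longrightarrow> card R \<le> card R'))
   \<or> ((\<nexists>R'. R' \<subseteq> rep i \<and> winner_changes N B rs rep c b m i R') \<and> R = rep i)"

end

theory Submission
  imports Defs
begin


fun wk :: "'a set \<Rightarrow> 'a set \<Rightarrow> ('a \<Rightarrow> 'a set) \<Rightarrow> 'a list \<Rightarrow> bool" where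
  "wk N B G (x # y # zs) = (x \<in> N - B \<and> y \<in> G x \<and> wk N B G (y # zs))"
| "wk N B G _ = True"

lemma wk_nth:
  "(\<forall>k. Suc k < length xs \<longrightarrow> xs ! k \<in> N - B \<and> xs ! Suc k \<in> G (xs ! k)) \<longleftrightarrow> wk N B G xs"
proof (induction N B G xs rule: wk.induct)
  case (1 N B G x y zs)
  have "(\<forall>k. Suc k < length (x # y # zs) \<longrightarrow> (x # y # zs) ! k \<in> N - B \<and> (x # y # zs) ! Suc k \<in> G ((x # y # zs) ! k))
     \<longleftrightarrow> (x \<in> N - B \<and> y \<in> G x) \<and> (\<forall>k. Suc k < length (y # zs) \<longrightarrow> (y # zs) ! k \<in> N - B \<and> (y # zs) ! Suc k \<in> G ((y # zs) ! k))"
    (is "?L \<longleftrightarrow> ?R")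
  proof
    assume ?L
    then show ?R by (metis Suc_less_eq length_Cons nth_Cons_0 nth_Cons_Suc zero_less_Suc)
  next
    assume r: ?R
    show ?L
    proof (intro allI impI)
      fix k assume "Suc k < length (x # y # zs)"
      then show "(x # y # zs) ! k \<in> N - B \<and> (x # y # zs) ! Suc k \<in> G ((x # y # zs) ! k)"
        using r by (cases k) auto
    qed
  qed
  with 1 show ?case by simp
qed auto

lemma tc_iff:
  "trading_chain N B rs G xs i \<longleftrightarrow>
     xs \<noteq> [] \<and> last xs = i \<and> distinct xs \<and> set xs \<subseteq> N \<and> hd xs \<in> rs \<and> wk N B G xs"
  unfolding trading_chain_def wk_nth ..

lemma wk_split: "wk N B G (p @ x # q) \<longleftrightarrow> wk N B G (p @ [x]) \<and> wk N B G (x # q)"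
proof (induction p)
  case Nil
  then show ?case by (cases q) auto
next
  case (Cons a p)
  then show ?case by (cases p) auto
qed

lemma wk_upd: "a \<notin> set xs \<Longrightarrow> wk N B (G(a := X)) xs = wk N B G xs"
  by (induction N B G xs rule: wk.induct) auto

lemma wk_mono: "(\<forall>x. G' x \<subseteq> G x) \<Longrightarrow> wk N B G' xs \<Longrightarrow> wk N B G xs"
  by (induction N B G xs rule: wk.induct) auto

lemma cc_split: "chain_cost c (a @ x # d) = sum_list (map c a) + chain_cost c (x # d)"
  unfolding chain_cost_def by (simp add: butlast_append)

lemma cc_nonneg: "\<forall>i. 0 \<le> (c::'a \<Rightarrow> real) i \<Longrightarrow> 0 \<le> chain_cost c xs"
  unfolding chain_cost_def by (rule sum_list_nonneg) auto

lemma splice: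
  assumes tc: "trading_chain N B rs G (p @ [u]) u"
    and w: "wk N B G (u # q)" and d: "distinct (u # q)" and sN: "set (u # q) \<subseteq> N"
    and cn: "\<forall>i. 0 \<le> (c::'a \<Rightarrow> real) i"
  shows "\<exists>zs. trading_chain N B rs G zs (last (u # q)) \<and>
           chain_cost c zs \<le> chain_cost c (p @ [u]) + chain_cost c (u # q)"
proof -
  have "\<exists>y\<in>set (p @ [u]). y \<in> set (u # q)" by simp
  then obtain a x b where ab: "p @ [u] = a @ x # b" and xin: "x \<in> set (u # q)"
    and na: "\<forall>y\<in>set a. y \<notin> set (u # q)"
    using split_list_first_prop[of "p @ [u]" "\<lambda>y. y \<in> set (u # q)"] by blast
  obtain e f where ef: "u # q = e @ x # f" using xin split_list by metis
  have tc': "distinct (a @ x # b) \<and> set (a @ x # b) \<subseteq> N \<and> hd (a @ x # b) \<in> rs \<and> wk N B G (a @ x # b)"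
    using tc unfolding tc_iff ab by simp
  define zs where "zs = a @ x # f"
  have w1: "wk N B G (a @ [x])" using tc' wk_split[of N B G a x b] by simp
  have w2: "wk N B G (x # f)" using w wk_split[of N B G e x f] unfolding ef by simp
  have wz: "wk N B G zs" unfolding zs_def using w1 w2 wk_split[of N B G a x f] by simp
  have lz: "last zs = last (u # q)" unfolding zs_def ef by simp
  have dz: "distinct zs"
  proof -
    have "distinct (x # f)" using d ef by simp
    moreover have "distinct a" using tc' by simp
    moreover have "set a \<inter> set (x # f) = {}" using na ef by auto
    ultimately show ?thesis unfolding zs_def by simp
  qed
  have sz: "set zs \<subseteq> N" using tc' sN ef unfolding zs_def by auto
  have hz: "hd zs \<in> rs" using tc' unfolding zs_def by (cases a) auto
  have tz: "trading_chain N B rs G zs (last (u # q))"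
    unfolding tc_iff using wz lz dz sz hz by (simp add: zs_def)
  have c1: "chain_cost c (p @ [u]) \<ge> sum_list (map c a)"
    using cc_split[of c a x b] cc_nonneg[OF cn, of "x # b"] ab by simp
  have c2: "chain_cost c (u # q) \<ge> chain_cost c (x # f)"
    using cc_split[of c e x f] ef sum_list_nonneg[of "map c e"] cn by auto
  have "chain_cost c zs = sum_list (map c a) + chain_cost c (x # f)"
    unfolding zs_def by (rule cc_split)
  with c1 c2 tz show ?thesis by force
qed

lemma fin_costs: "finite N \<Longrightarrow> finite {chain_cost c xs | xs. trading_chain N B rs G xs v}"
proof -
  assume "finite N"
  then have "finite {xs. set xs \<subseteq> N \<and> distinct xs}" by (rule finite_subset_distinct)
  then have "finite {xs. trading_chain N B rs G xs v}"
    by (rule finite_subset[rotated]) (auto simp: trading_chain_def)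
  then have "finite (chain_cost c ` {xs. trading_chain N B rs G xs v})" by simp
  moreover have "{chain_cost c xs | xs. trading_chain N B rs G xs v} = chain_cost c ` {xs. trading_chain N B rs G xs v}"
    by auto
  ultimately show ?thesis by simp
qed

lemma SW_ge: "finite N \<Longrightarrow> trading_chain N B rs G xs v \<Longrightarrow> SW N B rs G c b v \<ge> b v - chain_cost c xs"
  unfolding SW_def using fin_costs[of N c B rs G v] by (auto intro!: Min_le)

lemma SW_eq: "finite N \<Longrightarrow> is_LCC N B rs G c xs v \<Longrightarrow> SW N B rs G c b v = b v - chain_cost c xs"
proof -
  assume f: "finite N" and l: "is_LCC N B rs G c xs v"
  have "Min {chain_cost c ys | ys. trading_chain N B rs G ys v} = chain_cost c xs"
    using l fin_costs[OF f, of c B rs G v] unfolding is_LCC_def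
    by (intro Min_eqI) auto
  then show ?thesis unfolding SW_def by simp
qed

theorem lemma1:
  fixes N B rs :: "'a::linorder set"
    and s :: 'a
    and r rep :: "'a \<Rightarrow> 'a set"
    and c b :: "'a \<Rightarrow> real"
    and m m' :: 'a
    and LCCm LCCm' :: "'a list"
    and k :: nat
    and Rstar :: "'a set"
  assumes finN: "finite N"
    and s_notin: "s \<notin> N"
    and B_sub: "B \<subseteq> N"
    and rs_sub: "rs \<subseteq> N"
    and r_sub: "\<forall>i\<in>N - B. r i \<subseteq> N"
    and rep_sub: "\<forall>i\<in>N - B. rep i \<subseteq> r i"
    and c_nonneg: "\<forall>i. 0 \<le> c i"
    and b_nonneg: "\<forall>i\<in>B. 0 \<le> b i"
    and win: "is_winner N B rs rep c b m"
    and lcc: "is_LCC N B rs rep c LCCm m"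
    and k_int: "Suc k < length LCCm"
    and thr: "is_threshold N B rs rep c b m (LCCm ! k) Rstar"
    and win': "is_winner N B rs (rep((LCCm ! k) := rep (LCCm ! k) - Rstar)) c b m'"
    and neq: "m' \<noteq> m"
    and lcc': "is_LCC N B rs (rep((LCCm ! k) := rep (LCCm ! k) - Rstar)) c LCCm' m'"
  shows "set (drop (Suc k) LCCm) \<inter> set LCCm' = {}"
proof (rule ccontr)
  assume "set (drop (Suc k) LCCm) \<inter> set LCCm' \<noteq> {}"
  then obtain z where z1: "z \<in> set (drop (Suc k) LCCm)" and z2: "z \<in> set LCCm'" by blast
  define L where "L = LCCm"
  define x0 where "x0 = L ! k"
  define G' where "G' = rep(x0 := rep x0 - Rstar)"
  have G'sub: "\<forall>x. G' x \<subseteq> rep x" unfolding G'_def by auto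
  from z1 obtain i where i: "i < length (drop (Suc k) L)" "drop (Suc k) L ! i = z"
    unfolding L_def by (metis in_set_conv_nth)
  define j where "j = Suc k + i"
  have jl: "j < length L" and Lj: "L ! j = z" and kj: "k < j" using i unfolding j_def by auto
  define P1 where "P1 = take j L"
  define S1 where "S1 = drop (Suc j) L"
  have Ldec: "L = P1 @ z # S1" unfolding P1_def S1_def using Lj jl id_take_nth_drop by metis
  have x0P1: "x0 \<in> set P1" unfolding x0_def P1_def using kj jl
    by (metis in_set_conv_nth length_take min.absorb4 nth_take)
  have tcL: "trading_chain N B rs rep L m" using lcc unfolding is_LCC_def L_def by simp
  then have Lp: "distinct L \<and> set L \<subseteq> N \<and> hd L \<in> rs \<and> wk N B rep L \<and> last L = m"
    unfolding tc_iff by simp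
  have x0S1: "x0 \<notin> set (z # S1)" using Lp x0P1 unfolding Ldec by auto
  have wS1: "wk N B rep (z # S1)" using Lp wk_split[of N B rep P1 z S1] unfolding Ldec by simp
  have wS1': "wk N B G' (z # S1)" unfolding G'_def using wk_upd[OF x0S1] wS1 by simp
  have wP1: "wk N B rep (P1 @ [z])" using Lp wk_split[of N B rep P1 z S1] unfolding Ldec by simp
  have tcP1: "trading_chain N B rs rep (P1 @ [z]) z"
    unfolding tc_iff using Lp wP1 unfolding Ldec by (cases P1) auto
  have dS1: "distinct (z # S1)" "set (z # S1) \<subseteq> N" "last (z # S1) = m"
    using Lp unfolding Ldec by auto
  have costL: "chain_cost c L = sum_list (map c P1) + chain_cost c (z # S1)"
    unfolding Ldec by (rule cc_split)
  have ccP1: "chain_cost c (P1 @ [z]) = sum_list (map c P1)" unfolding chain_cost_def by simp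
  obtain P2 S2 where L'dec: "LCCm' = P2 @ z # S2" using z2 split_list by metis
  have tcL': "trading_chain N B rs G' LCCm' m'" using lcc' unfolding is_LCC_def G'_def x0_def L_def by simp
  then have L'p: "distinct LCCm' \<and> set LCCm' \<subseteq> N \<and> hd LCCm' \<in> rs \<and> wk N B G' LCCm' \<and> last LCCm' = m'"
    unfolding tc_iff by simp
  have wS2': "wk N B G' (z # S2)" using L'p wk_split[of N B G' P2 z S2] unfolding L'dec by simp
  have wS2: "wk N B rep (z # S2)" using wk_mono[OF G'sub wS2'] .
  have wP2: "wk N B G' (P2 @ [z])" using L'p wk_split[of N B G' P2 z S2] unfolding L'dec by simp
  have tcP2: "trading_chain N B rs G' (P2 @ [z]) z"
    unfolding tc_iff using L'p wP2 unfolding L'dec by (cases P2) auto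
  have dS2: "distinct (z # S2)" "set (z # S2) \<subseteq> N" "last (z # S2) = m'"
    using L'p unfolding L'dec by auto
  have costL': "chain_cost c LCCm' = sum_list (map c P2) + chain_cost c (z # S2)"
    unfolding L'dec by (rule cc_split)
  have ccP2: "chain_cost c (P2 @ [z]) = sum_list (map c P2)" unfolding chain_cost_def by simp
  obtain zs where zs: "trading_chain N B rs rep zs m'"
      "chain_cost c zs \<le> chain_cost c (P1 @ [z]) + chain_cost c (z # S2)"
    using splice[OF tcP1 wS2 dS2(1) dS2(2) c_nonneg] dS2(3) by metis
  have SWm: "SW N B rs rep c b m = b m - chain_cost c L"
    using SW_eq[OF finN] lcc unfolding L_def by blast
  have SWm'1: "SW N B rs rep c b m' \<ge> b m' - chain_cost c zs" using SW_ge[OF finN zs(1)] .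
  have m'B: "m' \<in> B" using win' unfolding is_winner_def by simp
  have reach1: "reachable N B rs rep m'" using zs(1) unfolding reachable_def by blast
  have o1: "SW N B rs rep c b m' < SW N B rs rep c b m \<or>
        (SW N B rs rep c b m' = SW N B rs rep c b m \<and> m \<le> m')"
    using win m'B reach1 unfolding is_winner_def by blast
  obtain ys where ys: "trading_chain N B rs G' ys m"
      "chain_cost c ys \<le> chain_cost c (P2 @ [z]) + chain_cost c (z # S1)"
    using splice[OF tcP2 wS1' dS1(1) dS1(2) c_nonneg] dS1(3) by metis
  have SWm'2: "SW N B rs G' c b m' = b m' - chain_cost c LCCm'"
    using SW_eq[OF finN] lcc' unfolding G'_def x0_def L_def by blast
  have SWm2: "SW N B rs G' c b m \<ge> b m - chain_cost c ys" using SW_ge[OF finN ys(1)] .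
  have mB: "m \<in> B" using win unfolding is_winner_def by simp
  have reach2: "reachable N B rs G' m" using ys(1) unfolding reachable_def by blast
  have o2: "SW N B rs G' c b m < SW N B rs G' c b m' \<or>
        (SW N B rs G' c b m = SW N B rs G' c b m' \<and> m' \<le> m)"
    using win' mB reach2 unfolding is_winner_def G'_def x0_def L_def by blast
  have "m \<le> m'" using o1 SWm SWm'1 zs(2) costL ccP1 SWm'2 SWm2 ys(2) costL' ccP2 o2 by linarith
  moreover have "m' \<le> m" using o1 SWm SWm'1 zs(2) costL ccP1 SWm'2 SWm2 ys(2) costL' ccP2 o2 by linarith
  ultimately show False using neq by simp
qed

end
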